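(* Let $B\in\mathcal O_{\widetilde{\mathfrak a}}$ be a simple $\widetilde{\mathfrak a}$-module. (1) $\mathrm{ord}_{\widetilde{\mathfrak a}}(B)=\mathrm{ord}_{\widetilde{\mathfrak a}}(v)$ for all $0\ne v\in B$, and there exists $(r,s)\in\mathbb Z_+^2$ such that $\mathcal L^{(r,s)}B=0$. (2) If $\mathrm{ord}_{\widetilde{\mathfrak a}}(B)=0$, then $B$ is a simple $\mathfrak a$-module. (3) If $r=\mathrm{ord}_{\widetilde{\mathfrak a}}(B)>0$, then $I_{r-1}$ acts bijectively on $B$.
   Context: In the Lie algebra with basis $\{d_n=t^{n+1}\frac{d}{dt},I_n=t^n\}$ (brackets $[d_n,d_m]=(m-n)d_{m+n}$, $[d_n,I_m]=mI_{m+n}$, $[I_n,I_m]=0$ for the indices used here), let $\mathfrak a=\mathrm{span}\{d_i\mid i\ge0\}$, $\widetilde{\mathfrak a}=\mathrm{span}\{d_i,I_i\mid i\ge0\}$, and $\mathcal L^{(r,s)}=\mathrm{span}\{I_{r+i},d_{s+i}\mid i\ge0\}$. $\mathcal O_{\widetilde{\mathfrak a}}$ is the category of $\widetilde{\mathfrak a}$-modules $V$ such that for each $v\in V$ there is $n>0$ with $d_iv=I_iv=0$ for all $i\ge n$. For $0\ne v\in B$, $\mathrm{ord}_{\widetilde{\mathfrak a}}(v)$ is the minimal $r\in\mathbb Z_+$ with $I_{r+i}v=0$ for all $i\ge0$, and $\mathrm{ord}_{\widetilde{\mathfrak a}}(B)$ is the maximum of the orders of its nonzero elements ($\infty$ if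 it does not exist). *)

theory Defs
  imports Main "HOL-Library.Extended_Nat"
begin

text \<open>A module over the Lie algebra  atilde = span{d_i, I_i | i >= 0}  (over the complex
numbers) on the vector space carried by the type 'v with scalar multiplication sc.\<close>

definition atilde_module ::
  "(complex \<Rightarrow> 'v::ab_group_add \<Rightarrow> 'v) \<Rightarrow> (nat \<Rightarrow> 'v \<Rightarrow> 'v) \<Rightarrow> (nat \<Rightarrow> 'v \<Rightarrow> 'v) \<Rightarrow> bool" where
  "atilde_module sc d I \<longleftrightarrow>
     vector_space sc \<and>
     (\<forall>n. Vector_Spaces.linear sc sc (d n)) \<and> (\<forall>n. Vector_Spaces.linear sc sc (I n)) \<and>
     (\<forall>n m v. d n (d m v) - d m (d n v) = sc (of_int (int m - int n)) (d (m + n) v)) \<and>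
     (\<forall>n m v. d n (I m v) - I m (d n v) = sc (of_nat m) (I (m + n) v)) \<and>
     (\<forall>n m v. I n (I m v) - I m (I n v) = 0)"

definition in_O_atilde :: "(nat \<Rightarrow> 'v::zero \<Rightarrow> 'v) \<Rightarrow> (nat \<Rightarrow> 'v \<Rightarrow> 'v) \<Rightarrow> bool" where
  "in_O_atilde d I \<longleftrightarrow> (\<forall>v. \<exists>n>0. \<forall>i\<ge>n. d i v = 0 \<and> I i v = 0)"

text \<open>Submodule for the subalgebra spanned by the operators in the family ops.\<close>
definition is_submodule ::
  "(complex \<Rightarrow> 'v::ab_group_add \<Rightarrow> 'v) \<Rightarrow> ('v \<Rightarrow> 'v) set \<Rightarrow> 'v set \<Rightarrow> bool" where
  "is_submodule sc ops W \<longleftrightarrow> module.subspace sc W \<and> (\<forall>f\<in>ops. \<forall>w\<in>W. f w \<in> W)"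

definition simple_module ::
  "(complex \<Rightarrow> 'v::ab_group_add \<Rightarrow> 'v) \<Rightarrow> ('v \<Rightarrow> 'v) set \<Rightarrow> bool" where
  "simple_module sc ops \<longleftrightarrow> (UNIV :: 'v set) \<noteq> {0} \<and>
     (\<forall>W. is_submodule sc ops W \<longrightarrow> W = {0} \<or> W = UNIV)"

definition ord_vec :: "(nat \<Rightarrow> 'v::zero \<Rightarrow> 'v) \<Rightarrow> 'v \<Rightarrow> nat" where
  "ord_vec I v = (LEAST r. \<forall>i. I (r + i) v = 0)"

definition ord_mod :: "(nat \<Rightarrow> 'v::zero \<Rightarrow> 'v) \<Rightarrow> enat" where
  "ord_mod I = (if \<exists>m. m \<in> ord_vec I ` {v. v \<noteq> 0} \<and> (\<forall>k\<in>ord_vec I ` {v. v \<noteq> 0}. k \<le> m)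
               then enat (GREATEST m. m \<in> ord_vec I ` {v. v \<noteq> 0}) else \<infinity>)"

end

theory Submission
  imports Defs
begin

theorem lemma28:
  fixes sc :: "complex \<Rightarrow> 'v::ab_group_add \<Rightarrow> 'v"
    and d I :: "nat \<Rightarrow> 'v \<Rightarrow> 'v"
  assumes mod: "atilde_module sc d I"
    and O: "in_O_atilde d I"
    and simple: "simple_module sc (range d \<union> range I)"
  shows "(\<forall>v. v \<noteq> 0 \<longrightarrow> ord_mod I = enat (ord_vec I v))
       \<and> (\<exists>r s. \<forall>i v. I (r + i) v = 0 \<and> d (s + i) v = 0)
       \<and> (ord_mod I = 0 \<longrightarrow> simple_module sc (range d))
       \<and> (\<forall>r. ord_mod I = enat r \<and> r > 0 \<longrightarrow> bij (I (r - 1)))"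
proof -
  have vs: "vector_space sc" using mod by (simp add: atilde_module_def)
  have ms: "module sc" using vs by (simp add: module_iff_vector_space)
  have hd: "module_hom sc sc (d n)" for n using mod
    by (simp add: atilde_module_def module_hom_iff_linear)
  have hI: "module_hom sc sc (I n)" for n using mod
    by (simp add: atilde_module_def module_hom_iff_linear)
  have d0: "d n 0 = 0" for n using module_hom.zero[OF hd] .
  have I0: "I n 0 = 0" for n using module_hom.zero[OF hI] .
  have sc0: "sc c 0 = 0" for c using module.scale_zero_right[OF ms] .
  have c1: "\<forall>n m v. d n (d m v) - d m (d n v) = sc (of_int (int m - int n)) (d (m + n) v)"
    using mod by (simp add: atilde_module_def)
  have c2: "\<forall>n m v. d n (I m v) - I m (d n v) = sc (of_nat m) (I (m + n) v)"
    using mod by (simp add: atilde_module_def)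
  have c3: "\<forall>n m v. I n (I m v) - I m (I n v) = 0"
    using mod by (simp add: atilde_module_def)
  have dd: "d n (d m v) = d m (d n v) + sc (of_int (int m - int n)) (d (m + n) v)" for n m v
    using c1[rule_format, of n m v] by (simp add: diff_eq_eq add.commute)
  have dI: "d n (I m v) = I m (d n v) + sc (of_nat m) (I (m + n) v)" for n m v
    using c2[rule_format, of n m v] by (simp add: diff_eq_eq add.commute)
  have II: "I n (I m v) = I m (I n v)" for n m v
    using c3[rule_format, of n m v] by simp
  have subdef: "module.subspace sc W \<longleftrightarrow> 0 \<in> W \<and> (\<forall>x\<in>W. \<forall>y\<in>W. x + y \<in> W) \<and> (\<forall>c. \<forall>x\<in>W. sc c x \<in> W)" for W
    using module.subspace_def[OF ms] .
  have nontriv: "(UNIV :: 'v set) \<noteq> {0}" using simple by (simp add: simple_module_def)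
  have univ: "W = UNIV" if "module.subspace sc W" "\<And>j w. w \<in> W \<Longrightarrow> d j w \<in> W"
      "\<And>j w. w \<in> W \<Longrightarrow> I j w \<in> W" "v \<in> W" "v \<noteq> 0" for W v
  proof -
    have "is_submodule sc (range d \<union> range I) W" using that unfolding is_submodule_def by auto
    then have "W = {0} \<or> W = UNIV" using simple by (simp add: simple_module_def)
    then show ?thesis using that by auto
  qed
  have kersub: "module.subspace sc {w. \<forall>i. f i w = 0}" if "\<And>i. module_hom sc sc (f i)" for f :: "nat \<Rightarrow> 'v \<Rightarrow> 'v"
    unfolding subdef using module_hom.zero[OF that] module_hom.add[OF that] module_hom.scale[OF that] sc0
    by auto
  have ordex: "\<forall>i. I (ord_vec I v + i) v = 0" for v
  proof -
    obtain n where "\<forall>i\<ge>n. d i v = 0 \<and> I i v = 0" using O unfolding in_O_atilde_def by blast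
    then have "\<forall>i. I (n + i) v = 0" by simp
    then have "\<exists>r. \<forall>i. I (r + i) v = 0" by blast
    then show ?thesis unfolding ord_vec_def by (rule LeastI_ex)
  qed
  have ordle: "ord_vec I v \<le> k" if "\<forall>i. I (k + i) v = 0" for v k
    using that unfolding ord_vec_def by (rule Least_le)
  have kill: "I (ord_vec I v + i) w = 0" if "v \<noteq> 0" for v w i
  proof -
    let ?r = "ord_vec I v"
    have "{w. \<forall>i. I (?r + i) w = 0} = UNIV"
    proof (rule univ)
      show "module.subspace sc {w. \<forall>i. I (?r + i) w = 0}" by (rule kersub[OF hI])
      show "I j w \<in> {w. \<forall>i. I (?r + i) w = 0}" if "w \<in> {w. \<forall>i. I (?r + i) w = 0}" for j w
        using that II I0 by auto
      show "d j w \<in> {w. \<forall>i. I (?r + i) w = 0}" if "w \<in> {w. \<forall>i. I (?r + i) w = 0}" for j w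
      proof -
        have "I (?r + i) (d j w) = 0" for i
        proof -
          have "d j (I (?r + i) w) = I (?r + i) (d j w) + sc (of_nat (?r+i)) (I (?r + i + j) w)"
            by (rule dI)
          moreover have "I (?r + i + j) w = 0" using that by (simp add: add.assoc)
          ultimately show ?thesis using that d0 sc0 by simp
        qed
        then show ?thesis by simp
      qed
      show "v \<in> {w. \<forall>i. I (?r + i) w = 0}" using ordex by simp
      show "v \<noteq> 0" by fact
    qed
    then show ?thesis by auto
  qed
  have ordeq: "ord_vec I u = ord_vec I v" if "u \<noteq> 0" "v \<noteq> 0" for u v
    using ordle[where v=u and k="ord_vec I v"] ordle[where v=v and k="ord_vec I u"] kill that by (simp add: antisym)
  obtain v0 :: 'v where v0: "v0 \<noteq> 0" using nontriv by auto
  define r0 where "r0 = ord_vec I v0"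
  have allord: "ord_vec I v = r0" if "v \<noteq> 0" for v using ordeq that v0 r0_def by blast
  have killr0: "I (r0 + i) w = 0" for i w using kill[OF v0] r0_def by simp
  have img: "ord_vec I ` {v. v \<noteq> 0} = {r0}" using allord v0 by force
  have om: "ord_mod I = enat r0"
    unfolding ord_mod_def img by (simp add: Greatest_equality)
  have P1: "\<forall>v. v \<noteq> 0 \<longrightarrow> ord_mod I = enat (ord_vec I v)" using om allord by simp
  have P2: "\<exists>r s. \<forall>i v. I (r + i) v = 0 \<and> d (s + i) v = 0"
  proof -
    obtain n where n: "\<forall>i\<ge>n. d i v0 = 0 \<and> I i v0 = 0" using O unfolding in_O_atilde_def by blast
    define s where "s = max r0 n"
    have "{w. \<forall>i. d (s + i) w = 0} = UNIV"
    proof (rule univ)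
      show "module.subspace sc {w. \<forall>i. d (s + i) w = 0}" by (rule kersub[OF hd])
      show "d j w \<in> {w. \<forall>i. d (s + i) w = 0}" if "w \<in> {w. \<forall>i. d (s + i) w = 0}" for j w
      proof -
        have "d (s + i) (d j w) = 0" for i
        proof -
          have "d (s+i) (d j w) = d j (d (s+i) w) + sc (of_int (int j - int (s+i))) (d (j + (s + i)) w)"
            by (rule dd)
          moreover have "d (j + (s + i)) w = 0" using that[simplified, rule_format, of "j + i"] by (simp add: add.left_commute)
          ultimately show ?thesis using that d0 sc0 by simp
        qed
        then show ?thesis by simp
      qed
      show "I j w \<in> {w. \<forall>i. d (s + i) w = 0}" if "w \<in> {w. \<forall>i. d (s + i) w = 0}" for j w
      proof -
        have "d (s + i) (I j w) = 0" for i
        proof -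
          have "d (s+i) (I j w) = I j (d (s+i) w) + sc (of_nat j) (I (j + (s + i)) w)"
            by (rule dI)
          moreover have "I (j + (s + i)) w = 0"
            using killr0[of "j + (s + i) - r0" w] unfolding s_def by simp
          ultimately show ?thesis using that I0 sc0 by simp
        qed
        then show ?thesis by simp
      qed
      show "v0 \<in> {w. \<forall>i. d (s + i) w = 0}" using n unfolding s_def by simp
      show "v0 \<noteq> 0" by fact
    qed
    then show ?thesis using killr0 by blast
  qed
  have P3: "ord_mod I = 0 \<longrightarrow> simple_module sc (range d)"
  proof
    assume "ord_mod I = 0"
    then have "r0 = 0" using om by (simp add: zero_enat_def)
    then have Iz: "I i w = 0" for i w using killr0[of i w] by simp
    show "simple_module sc (range d)"
      unfolding simple_module_def
    proof (intro conjI allI impI)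
      show "(UNIV :: 'v set) \<noteq> {0}" by fact
      fix W assume W: "is_submodule sc (range d) W"
      then have "0 \<in> W" unfolding is_submodule_def subdef by simp
      then have "is_submodule sc (range d \<union> range I) W" using W Iz unfolding is_submodule_def by auto
      then show "W = {0} \<or> W = UNIV" using simple by (simp add: simple_module_def)
    qed
  qed
  have P4: "\<forall>r. ord_mod I = enat r \<and> r > 0 \<longrightarrow> bij (I (r - 1))"
  proof (intro allI impI)
    fix r assume "ord_mod I = enat r \<and> r > 0"
    then have rr: "r = r0" "r0 > 0" using om by auto
    define p where "p = r0 - 1"
    have pr: "p + j = r0 + (j - 1)" if "j > 0" for j using that rr unfolding p_def by simp
    have injI: "inj (I p)"
    proof -
      have K: "{w. I p w = 0} = {0}"
      proof (rule ccontr)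
        assume ne: "{w. I p w = 0} \<noteq> {0}"
        have z: "0 \<in> {w. I p w = 0}" using I0 by simp
        then obtain u where u: "u \<noteq> 0" "I p u = 0" using ne by blast
        have "{w. I p w = 0} = UNIV"
        proof (rule univ)
          show "module.subspace sc {w. I p w = 0}"
            using kersub[of "\<lambda>_. I p"] hI by simp
          show "I j w \<in> {w. I p w = 0}" if "w \<in> {w. I p w = 0}" for j w
            using that II I0 by auto
          show "d j w \<in> {w. I p w = 0}" if "w \<in> {w. I p w = 0}" for j w
          proof -
            have e: "d j (I p w) = I p (d j w) + sc (of_nat p) (I (p + j) w)" by (rule dI)
            have "I (p + j) w = 0"
            proof (cases "j = 0")
              case True then show ?thesis using that by simp
            next
              case False
              then have "p + j = r0 + (j - 1)" using pr by blast
              then show ?thesis using killr0[of "j - 1" w] by (simp only:)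
            qed
            then show ?thesis using e that d0 sc0 by simp
          qed
          show "u \<in> {w. I p w = 0}" using u by simp
          show "u \<noteq> 0" by fact
        qed
        then have KU: "{w. I p w = 0} = UNIV" .
        have "\<forall>i. I (p + i) v0 = 0"
        proof
          fix i show "I (p + i) v0 = 0"
          proof (cases "i = 0")
            case True then show ?thesis using KU by auto
          next
            case False
            then have "p + i = r0 + (i - 1)" using pr by blast
            then show ?thesis using killr0[of "i - 1" v0] by (simp only:)
          qed
        qed
        then have "r0 \<le> p" using ordle r0_def by simp
        then show False using rr unfolding p_def by simp
      qed
      then show ?thesis using module_hom.inj_iff_eq_0[OF hI] by auto
    qed
    have surjI: "range (I p) = UNIV"
    proof (rule univ)
      show "module.subspace sc (range (I p))"
        using module_hom.subspace_image[OF hI module.subspace_UNIV[OF ms]] .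
      show "I j w \<in> range (I p)" if "w \<in> range (I p)" for j w
        using that II by auto
      show "d j w \<in> range (I p)" if hw: "w \<in> range (I p)" for j w
      proof -
        obtain x where x: "w = I p x" using hw by auto
        have e: "d j (I p x) = I p (d j x) + sc (of_nat p) (I (p + j) x)" by (rule dI)
        show ?thesis
        proof (cases "j = 0")
          case True
          then have "d j w = I p (d j x + sc (of_nat p) x)"
            using e x module_hom.add[OF hI] module_hom.scale[OF hI] by simp
          then show ?thesis by auto
        next
          case False
          then have "p + j = r0 + (j - 1)" using pr by blast
          then have "I (p + j) x = 0" using killr0[of "j - 1" x] by (simp only:)
          then have "d j w = I p (d j x)" using e x sc0 by simp
          then show ?thesis by auto
        qed
      qed
      show "I p v0 \<in> range (I p)" by simp
      show "I p v0 \<noteq> 0" using injI v0 I0 unfolding inj_def by metis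
    qed
    show "bij (I (r - 1))" using injI surjI rr unfolding p_def bij_def surj_def by auto
  qed
  show ?thesis using P1 P2 P3 P4 by blast
qed

end
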